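(* For a nonempty finite subset $E\subseteq\mathbb{N}$, the filter $\mathcal{F}_E$ is a maximal element of the poset $\mathfrak{F}\setminus\{\mathcal{F}_\infty\}$ if and only if there exists an odd prime $p\notin\Pi_E$ such that $A_E=\{2,p\}$.
   Context: $\mathbb{N}=\{1,2,\dots\}$, $\mathbb{N}_0=\{0\}\cup\mathbb{N}$, $\Pi$ the set of primes, $\Pi_z$ the set of prime divisors of $z$. The Kirch topology $\tau_K$ on $\mathbb{N}$ is generated by the base of all $a+b\mathbb{N}_0=\{a+bn:n\in\mathbb{N}_0\}$ with $a,b\in\mathbb{N}$ coprime and $b$ square-free. Closures $\overline{U}$ are in $\tau_K$; $\tau_x=\{U\in\tau_K:x\in U\}$. For finite $E\subseteq\mathbb{N}$, $\mathcal{F}_E=\{B\subseteq\mathbb{N}:\exists (U_x)_{x\in E}\in\prod_{x\in E}\tau_x\ (\bigcap_{x\in E}\overline{U_x}\subseteq B)\}$ (with $\mathcal{F}_\emptyset=\{\mathbb{N}\}$); $\mathcal{F}_\infty=\{B\subseteq\mathbb{N}:\exists n\in\mathbb{N}\ \exists U_1,\dots,U_n\in\tau_K\setminus\{\emptyset\}\ (\overline{U_1}\cap\dots\cap\overline{U_n}\subseteq B)\}$; and $\mathfrak{F}=\{\mathcal{F}_E:E\subseteq\mathbb{N}\text{ finite}\}\cup\{\mathcal{F}_\infty\}$, ordered by inclusion. For nonempty finite $E$: $\Pi_E=\bigcap_{z\in E}\Pi_z$ and $A_E=\{p\in\Pi:\exists k\in\mathbb{N}\ (E\subseteq p\mathbb{Z}\cup(k+p\mathbb{Z}))\}$.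 *)

theory Defs
  imports "HOL-Computational_Algebra.Computational_Algebra" "HOL-Number_Theory.Number_Theory"
begin

definition Npos :: "nat set" where "Npos = {n. n \<ge> 1}"

definition kirch_basic :: "nat set \<Rightarrow> bool" where
  "kirch_basic S \<longleftrightarrow> (\<exists>a b. a \<ge> 1 \<and> b \<ge> 1 \<and> coprime a b \<and> squarefree b \<and>
      S = {a + b * n | n. True})"

definition kirch_open :: "nat set \<Rightarrow> bool" where
  "kirch_open U \<longleftrightarrow> U \<subseteq> Npos \<and> (\<forall>x\<in>U. \<exists>S. kirch_basic S \<and> x \<in> S \<and> S \<subseteq> U)"

definition kirch_closure :: "nat set \<Rightarrow> nat set" where
  "kirch_closure A = {x \<in> Npos. \<forall>V. kirch_open V \<and> x \<in> V \<longrightarrow> V \<inter> A \<noteq> {}}"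

definition kirch_nbhds :: "nat \<Rightarrow> nat set set" where
  "kirch_nbhds x = {U. kirch_open U \<and> x \<in> U}"

text \<open>The filter F_E (for finite E); for E empty this is {Npos}.\<close>
definition filt :: "nat set \<Rightarrow> nat set set" where
  "filt E = {B. B \<subseteq> Npos \<and> (\<exists>U :: nat \<Rightarrow> nat set. (\<forall>x\<in>E. U x \<in> kirch_nbhds x) \<and>
       Npos \<inter> (\<Inter>x\<in>E. kirch_closure (U x)) \<subseteq> B)}"

definition filt_inf :: "nat set set" where
  "filt_inf = {B. B \<subseteq> Npos \<and> (\<exists>Us :: nat set list. Us \<noteq> [] \<and>
       (\<forall>U\<in>set Us. kirch_open U \<and> U \<noteq> {}) \<and> (\<Inter>U\<in>set Us. kirch_closure U) \<subseteq> B)}"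

definition filt_family :: "nat set set set" where
  "filt_family = {filt E | E. finite E \<and> E \<subseteq> Npos} \<union> {filt_inf}"

definition maximal_in :: "'a set set \<Rightarrow> 'a set \<Rightarrow> bool" where
  "maximal_in P F \<longleftrightarrow> F \<in> P \<and> (\<forall>G\<in>P. F \<subseteq> G \<longrightarrow> G = F)"

definition PiE_primes :: "nat set \<Rightarrow> nat set" where
  "PiE_primes E = (\<Inter>z\<in>E. prime_factors z)"

definition A_set :: "nat set \<Rightarrow> nat set" where
  "A_set E = {p. prime p \<and> (\<exists>k::nat. k \<ge> 1 \<and>
      (\<forall>z\<in>E. (int p) dvd (int z) \<or> [int z = int k] (mod int p)))}"

end

theory Submission
  imports Defs
begin

lemma sqf_dvd_nat:
  fixes g m :: nat
  assumes "squarefree g" "\<And>p. prime p \<Longrightarrow> p dvd g \<Longrightarrow> p dvd m"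
  shows "g dvd m"
proof (cases "m = 0")
  case True then show ?thesis by simp
next
  case False
  have g0: "g \<noteq> 0" using assms(1) by (metis not_squarefree_0)
  show ?thesis
  proof (rule multiplicity_le_imp_dvd[OF g0])
    fix p :: nat assume p: "prime p"
    have "\<forall>p. prime p \<longrightarrow> multiplicity p g \<le> 1"
      using assms(1) squarefree_factorial_semiring''[OF g0] by simp
    then have "multiplicity p g \<le> 1" using p by blast
    moreover have "multiplicity p g = 1 \<Longrightarrow> 1 \<le> multiplicity p m"
    proof -
      assume "multiplicity p g = 1"
      then have "p dvd g" using prime_multiplicity_gt_zero_iff[of p g] g0 p by simp
      then have "p dvd m" using assms(2) p by blast
      then show ?thesis using prime_multiplicity_gt_zero_iff[of p m] False p by simp
    qed
    ultimately show "multiplicity p g \<le> multiplicity p m" by linarith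
  qed
qed

lemma crt_gen:
  fixes y a b c :: nat
  assumes "b > 0" "c > 0" "[y = a] (mod gcd b c)"
  shows "\<exists>n m. y + c*n = a + b*m"
proof -
  have "[int y = int a] (mod int (gcd b c))" using assms(3) cong_int_iff by blast
  then have "gcd (int b) (int c) dvd int y - int a" by (simp add: cong_iff_dvd_diff)
  then obtain d where d: "int y - int a = gcd (int b) (int c) * d" by (auto elim: dvdE)
  obtain u v where uv: "u * int b + v * int c = gcd (int b) (int c)" using bezout_int by blast
  define L where "L = \<bar>d*v\<bar> + \<bar>d*u\<bar>"
  have L0: "L \<ge> 0" unfolding L_def by simp
  have "L * int b \<ge> L" using assms(1) L0 by (simp add: mult_le_cancel_left1)
  then have n0: "- d*v + L * int b \<ge> 0" unfolding L_def by linarith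
  have "L * int c \<ge> L" using assms(2) L0 by (simp add: mult_le_cancel_left1)
  then have m0: "d*u + L * int c \<ge> 0" unfolding L_def by linarith
  have eq: "int y + int c * (- d*v + L * int b) = int a + int b * (d*u + L * int c)"
  proof -
    have "int y - int a = d * (u * int b + v * int c)" using d uv by simp
    then show ?thesis by (simp add: algebra_simps)
  qed
  have "int (y + c * nat (- d*v + L * int b)) = int (a + b * nat (d*u + L * int c))"
    using eq n0 m0 by simp
  then show ?thesis by (intro exI) (rule of_nat_eq_iff[THEN iffD1])
qed

lemma basic_kb:
  assumes "a \<ge> 1" "b \<ge> 1" "coprime a b" "squarefree b"
  shows "kirch_basic {a + b*n | n. True}"
  unfolding kirch_basic_def
  apply (rule exI[of _ a], rule exI[of _ b])
  using assms by simp

lemma basic_open: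
  assumes "a \<ge> 1" "b \<ge> 1" "coprime a b" "squarefree b"
  shows "kirch_open {a + b*n | n. True}"
  unfolding kirch_open_def
proof (intro conjI ballI)
  show "{a + b*n | n. True} \<subseteq> Npos" using assms(1) by (auto simp: Npos_def)
next
  fix z assume "z \<in> {a + b*n | n. True}"
  then obtain n where z: "z = a + b*n" by blast
  have "gcd b (n*b + a) = gcd b a" by (rule gcd_add_mult)
  moreover have "gcd b a = 1" using assms(3) by (metis coprime_iff_gcd_eq_1 gcd.commute)
  moreover have "n*b + a = z" using z by simp
  ultimately have "gcd b z = 1" by simp
  then have "coprime z b" by (metis coprime_iff_gcd_eq_1 gcd.commute)
  moreover have "z \<ge> 1" using z assms(1) by simp
  ultimately have "kirch_basic {z + b*m | m. True}" using basic_kb assms(2,4) by blast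
  moreover have "z = z + b*0" by simp
  then have "z \<in> {z + b*m | m. True}" by blast
  moreover have "{z + b*m | m. True} \<subseteq> {a + b*n | n. True}"
  proof
    fix w assume "w \<in> {z + b*m | m. True}"
    then obtain m where "w = z + b*m" by blast
    then have "w = a + b*(n+m)" using z by (simp add: algebra_simps)
    then show "w \<in> {a + b*n | n. True}" by blast
  qed
  ultimately show "\<exists>S. kirch_basic S \<and> z \<in> S \<and> S \<subseteq> {a + b*n | n. True}" by blast
qed

lemma cl_easy:
  assumes "y \<in> kirch_closure {a + b*n | n. True}" "prime p" "p dvd b"
  shows "p dvd y \<or> [y = a] (mod p)"
proof (rule ccontr)
  assume H: "\<not> (p dvd y \<or> [y = a] (mod p))"
  have y1: "y \<ge> 1" using assms(1) by (auto simp: kirch_closure_def Npos_def)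
  have "\<not> p dvd y" using H by blast
  then have "coprime p y" using assms(2) prime_imp_coprime by blast
  then have "coprime y p" by (metis coprime_commute)
  moreover have "p \<ge> 1" using assms(2) prime_gt_0_nat by (metis Suc_leI One_nat_def)
  moreover have "squarefree p" using assms(2) squarefree_prime by blast
  ultimately have "kirch_open {y + p*n | n. True}"
    using y1 basic_open by blast
  moreover have "y = y + p*0" by simp
  then have "y \<in> {y + p*n | n. True}" by blast
  ultimately have "{y + p*n | n. True} \<inter> {a + b*n | n. True} \<noteq> {}"
    using assms(1) unfolding kirch_closure_def by blast
  then obtain n m where e: "y + p*n = a + b*m" by blast
  obtain k where k: "b = p*k" using assms(3) by (auto elim: dvdE)
  have "[y = y + p*n] (mod p)" by (simp add: cong_def)
  also have "y + p*n = a + p*(k*m)" using e k by (simp add: algebra_simps)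
  also have "[a + p*(k*m) = a] (mod p)" by (simp add: cong_def)
  finally show False using H by blast
qed

lemma cl_hard:
  assumes "a \<ge> 1" "b \<ge> 1" "coprime a b" "squarefree b" "y \<ge> 1"
    and cond: "\<And>p. prime p \<Longrightarrow> p dvd b \<Longrightarrow> p dvd y \<or> [y = a] (mod p)"
  shows "y \<in> kirch_closure {a + b*n | n. True}"
  unfolding kirch_closure_def
proof (intro CollectI conjI allI impI)
  show "y \<in> Npos" using assms(5) by (simp add: Npos_def)
  fix V assume V: "kirch_open V \<and> y \<in> V"
  then obtain S where S: "kirch_basic S" "y \<in> S" "S \<subseteq> V" unfolding kirch_open_def by blast
  then obtain a' c where ac: "a' \<ge> 1" "c \<ge> 1" "coprime a' c" "squarefree c" "S = {a' + c*n | n. True}"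
    unfolding kirch_basic_def by blast
  obtain n0 where n0: "y = a' + c*n0" using S(2) ac(5) by blast
  define g where "g = gcd b c"
  have sg: "squarefree g" unfolding g_def using assms(4) squarefree_mono by (metis gcd_dvd1)
  have pg: "[y = a] (mod p)" if p: "prime p" "p dvd g" for p
  proof -
    have pb: "p dvd b" and pc: "p dvd c" using p unfolding g_def by auto
    have "\<not> p dvd y"
    proof
      assume "p dvd y"
      then have "p dvd a'" using n0 pc by (metis dvd_add_left_iff dvd_mult2)
      then show False using ac(3) pc p(1) by (metis coprime_common_divisor not_prime_unit)
    qed
    then show ?thesis using cond[OF p(1) pb] by blast
  qed
  have "[y = a] (mod g)"
  proof (cases "a \<le> y")
    case True
    have "g dvd y - a"
    proof (rule sqf_dvd_nat[OF sg])
      fix p :: nat assume "prime p" "p dvd g"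
      then have "[y = a] (mod p)" by (rule pg)
      then show "p dvd y - a" using True cong_altdef_nat by blast
    qed
    then show ?thesis using True cong_altdef_nat by blast
  next
    case False
    then have F: "y \<le> a" by simp
    have "g dvd a - y"
    proof (rule sqf_dvd_nat[OF sg])
      fix p :: nat assume "prime p" "p dvd g"
      then have "[y = a] (mod p)" by (rule pg)
      then have "[a = y] (mod p)" by (rule cong_sym)
      then show "p dvd a - y" using F cong_altdef_nat by blast
    qed
    then have "[a = y] (mod g)" using F cong_altdef_nat by blast
    then show ?thesis by (rule cong_sym)
  qed
  then obtain n m where e: "y + c*n = a + b*m" using crt_gen[of b c y a] assms(2) ac(2) g_def by auto
  have "a' + c*(n0+n) \<in> S" using ac(5) by blast
  moreover have "a' + c*(n0+n) = a + b*m" using e n0 by (simp add: algebra_simps)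
  ultimately show "V \<inter> {a + b*n | n. True} \<noteq> {}" using S(3) by blast
qed


lemma cl_mono: "A \<subseteq> A' \<Longrightarrow> kirch_closure A \<subseteq> kirch_closure A'"
  unfolding kirch_closure_def by blast

lemma cl_Npos: "kirch_closure A \<subseteq> Npos"
  unfolding kirch_closure_def by blast

lemma prodP_sqf:
  fixes P :: "nat set"
  assumes "\<forall>p\<in>P. prime p"
  shows "squarefree (\<Prod>P)"
proof -
  have "squarefree (prod (\<lambda>x. x) P)"
  proof (rule squarefree_prod_coprime)
    fix a b assume "a \<in> P" "b \<in> P" "a \<noteq> b"
    then show "coprime a b" using assms primes_coprime by blast
  next
    fix a assume "a \<in> P" then show "squarefree a" using assms squarefree_prime by blast
  qed
  then show ?thesis by simp
qed

lemma prodP_pos: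
  fixes P :: "nat set"
  assumes "\<forall>p\<in>P. prime p"
  shows "\<Prod>P \<ge> 1"
proof -
  have "\<Prod>P > 0" using assms prime_gt_0_nat by (metis prod_pos)
  then show ?thesis by simp
qed

lemma prodP_coprime:
  fixes P :: "nat set"
  assumes "\<forall>p\<in>P. prime p" "\<forall>p\<in>P. \<not> p dvd x"
  shows "coprime x (\<Prod>P)"
proof -
  have "coprime x (prod (\<lambda>i. i) P)"
  proof (rule prod_coprime_right)
    fix i assume "i \<in> P"
    then have "coprime i x" using assms prime_imp_coprime by blast
    then show "coprime x i" by (metis coprime_commute)
  qed
  then show ?thesis by simp
qed

definition okp :: "nat set \<Rightarrow> nat \<Rightarrow> nat \<Rightarrow> bool" where
  "okp E p y \<longleftrightarrow> p dvd y \<or> (\<forall>x\<in>E. \<not> p dvd x \<longrightarrow> [y = x] (mod p))"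

definition SS :: "nat set \<Rightarrow> nat \<Rightarrow> nat set" where
  "SS E N = {y\<in>Npos. \<forall>p. prime p \<longrightarrow> p \<le> N \<longrightarrow> okp E p y}"

definition TT :: "nat \<Rightarrow> nat set" where
  "TT N = {y\<in>Npos. \<forall>p. prime p \<longrightarrow> odd p \<longrightarrow> p \<le> N \<longrightarrow> p dvd y}"

lemma okp_cong:
  assumes "[y = r] (mod p)"
  shows "okp E p y \<longleftrightarrow> okp E p r"
proof -
  have d: "p dvd y \<longleftrightarrow> p dvd r" using assms cong_dvd_iff by blast
  have c: "[y = x] (mod p) \<longleftrightarrow> [r = x] (mod p)" for x
    using assms by (meson cong_sym cong_trans)
  show ?thesis unfolding okp_def using d c by simp
qed

lemma okp_2: "okp E 2 y"
  unfolding okp_def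
proof (cases "2 dvd y")
  case False
  have "[y = x] (mod 2)" if "\<not> 2 dvd x" for x
    using that False unfolding cong_def by (simp add: odd_iff_mod_2_eq_one)
  then show "2 dvd y \<or> (\<forall>x\<in>E. \<not> 2 dvd x \<longrightarrow> [y = x] (mod 2))" by blast
qed simp

lemma filt_sub1:
  assumes "finite E" "E \<subseteq> Npos" "B \<in> filt E"
  shows "B \<subseteq> Npos \<and> (\<exists>N. SS E N \<subseteq> B)"
proof -
  obtain U where U: "\<forall>x\<in>E. U x \<in> kirch_nbhds x" "Npos \<inter> (\<Inter>x\<in>E. kirch_closure (U x)) \<subseteq> B"
    and BN: "B \<subseteq> Npos" using assms(3) unfolding filt_def by blast
  have "\<forall>x\<in>E. \<exists>b. b \<ge> 1 \<and> coprime x b \<and> squarefree b \<and> {x + b*m | m. True} \<subseteq> U x"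
  proof
    fix x assume "x \<in> E"
    then have "kirch_open (U x)" "x \<in> U x" using U(1) unfolding kirch_nbhds_def by auto
    then obtain S where S: "kirch_basic S" "x \<in> S" "S \<subseteq> U x" unfolding kirch_open_def by blast
    then obtain a b where ab: "a \<ge> 1" "b \<ge> 1" "coprime a b" "squarefree b" "S = {a + b*n | n. True}"
      unfolding kirch_basic_def by blast
    obtain n0 where n0: "x = a + b*n0" using S(2) ab(5) by blast
    have "gcd b (n0*b + a) = gcd b a" by (rule gcd_add_mult)
    moreover have "gcd b a = 1" using ab(3) by (metis coprime_iff_gcd_eq_1 gcd.commute)
    moreover have "n0*b + a = x" using n0 by simp
    ultimately have "gcd b x = 1" by simp
    then have cx: "coprime x b" by (metis coprime_iff_gcd_eq_1 gcd.commute)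
    have "{x + b*m | m. True} \<subseteq> S"
    proof
      fix w assume "w \<in> {x + b*m | m. True}"
      then obtain m where "w = x + b*m" by blast
      then have "w = a + b*(n0+m)" using n0 by (simp add: algebra_simps)
      then show "w \<in> S" using ab(5) by blast
    qed
    then show "\<exists>b. b \<ge> 1 \<and> coprime x b \<and> squarefree b \<and> {x + b*m | m. True} \<subseteq> U x"
      using ab(2,4) cx S(3) by blast
  qed
  then obtain bf where bf: "\<forall>x\<in>E. bf x \<ge> 1 \<and> coprime x (bf x) \<and> squarefree (bf x) \<and> {x + bf x*m | m. True} \<subseteq> U x"
    by metis
  define N where "N = (\<Sum>x\<in>E. bf x)"
  have "SS E N \<subseteq> B"
  proof
    fix y assume y: "y \<in> SS E N"
    then have yN: "y \<in> Npos" and yok: "\<And>p. prime p \<Longrightarrow> p \<le> N \<Longrightarrow> okp E p y"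
      unfolding SS_def by auto
    have "y \<in> kirch_closure (U x)" if x: "x \<in> E" for x
    proof -
      have x1: "x \<ge> 1" using x assms(2) by (auto simp: Npos_def)
      have "y \<in> kirch_closure {x + bf x*m | m. True}"
      proof (rule cl_hard)
        show "1 \<le> y" using yN by (simp add: Npos_def)
        fix p assume p: "prime p" "p dvd bf x"
        have "bf x \<le> N" unfolding N_def using assms(1) x by (simp add: member_le_sum)
        moreover have "p \<le> bf x" using p bf x by (metis dvd_imp_le not_one_le_zero neq0_conv)
        ultimately have "okp E p y" using yok p(1) by simp
        moreover have "\<not> p dvd x"
        proof
          assume "p dvd x"
          then show False using bf x p by (metis coprime_common_divisor not_prime_unit)
        qed
        ultimately show "p dvd y \<or> [y = x] (mod p)" using x unfolding okp_def by blast
      qed (use bf x x1 in auto)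
      then show ?thesis using cl_mono bf x by blast
    qed
    then show "y \<in> B" using U(2) yN by blast
  qed
  then show ?thesis using BN by blast
qed


lemma filt_sub2:
  assumes "E \<subseteq> Npos" "B \<subseteq> Npos" "SS E N \<subseteq> B"
  shows "B \<in> filt E"
proof -
  define P where "P x = {p. prime p \<and> p \<le> N \<and> \<not> p dvd x}" for x
  define U where "U x = {x + \<Prod>(P x) * m | m. True}" for x
  have finP: "finite (P x)" for x unfolding P_def by (rule finite_subset[of _ "{..N}"]) auto
  have primP: "\<forall>p\<in>P x. prime p" for x unfolding P_def by blast
  have nb: "U x \<in> kirch_nbhds x" if x: "x \<in> E" for x
  proof -
    have x1: "x \<ge> 1" using x assms(1) by (auto simp: Npos_def)
    have "coprime x (\<Prod>(P x))" using prodP_coprime[OF primP] unfolding P_def by blast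
    then have "kirch_open (U x)" unfolding U_def
      using basic_open x1 prodP_pos[OF primP] prodP_sqf[OF primP] by blast
    moreover have "x = x + \<Prod>(P x) * 0" by simp
    then have "x \<in> U x" unfolding U_def by blast
    ultimately show ?thesis unfolding kirch_nbhds_def by blast
  qed
  have "Npos \<inter> (\<Inter>x\<in>E. kirch_closure (U x)) \<subseteq> SS E N"
  proof
    fix y assume y: "y \<in> Npos \<inter> (\<Inter>x\<in>E. kirch_closure (U x))"
    have "okp E p y" if p: "prime p" "p \<le> N" for p
    proof (cases "p dvd y")
      case True then show ?thesis unfolding okp_def by blast
    next
      case False
      have "[y = x] (mod p)" if x: "x \<in> E" "\<not> p dvd x" for x
      proof -
        have "p \<in> P x" unfolding P_def using p x by blast
        then have "p dvd \<Prod>(P x)" using dvd_prodI[OF finP, where f="\<lambda>i. i"] by simp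
        moreover have "y \<in> kirch_closure (U x)" using y x by blast
        ultimately have "p dvd y \<or> [y = x] (mod p)" using cl_easy p(1) unfolding U_def by blast
        then show "[y = x] (mod p)" using False by blast
      qed
      then show ?thesis unfolding okp_def by blast
    qed
    then show "y \<in> SS E N" using y unfolding SS_def by blast
  qed
  then show ?thesis unfolding filt_def using nb assms(2,3)
    by (intro CollectI conjI exI[of _ U]) blast+
qed

lemma filt_char:
  assumes "finite E" "E \<subseteq> Npos"
  shows "B \<in> filt E \<longleftrightarrow> B \<subseteq> Npos \<and> (\<exists>N. SS E N \<subseteq> B)"
  using filt_sub1[OF assms] filt_sub2[OF assms(2)] by blast

lemma SS_Npos: "SS E N \<subseteq> Npos" unfolding SS_def by blast

lemma SS_in_filt:
  assumes "finite E" "E \<subseteq> Npos"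
  shows "SS E N \<in> filt E"
  using filt_char[OF assms] SS_Npos by blast

lemma exists_in_SS:
  assumes q: "prime q" and ok: "okp E q r"
  shows "\<exists>y\<in>SS E N. [y = r] (mod q)"
proof -
  define P where "P = {p. prime p \<and> p \<le> N \<and> p \<noteq> q}"
  have finP: "finite P" unfolding P_def by (rule finite_subset[of _ "{..N}"]) auto
  have primP: "\<forall>p\<in>P. prime p" unfolding P_def by blast
  have "\<forall>p\<in>P. \<not> p dvd q"
  proof
    fix p assume "p \<in> P"
    then have "prime p" "p \<noteq> q" unfolding P_def by auto
    then show "\<not> p dvd q" using q primes_dvd_imp_eq by metis
  qed
  then have "coprime q (\<Prod>P)" using prodP_coprime[OF primP] by blast
  then have g: "gcd (\<Prod>P) q = 1" by (metis coprime_iff_gcd_eq_1 gcd.commute)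
  have P1: "\<Prod>P \<ge> 1" using prodP_pos[OF primP] .
  have "[r = \<Prod>P] (mod gcd (\<Prod>P) q)" using g by simp
  moreover have "\<Prod>P > 0" using P1 by simp
  moreover have "q > 0" using q prime_gt_0_nat by blast
  ultimately have "\<exists>n m. r + q*n = \<Prod>P + \<Prod>P * m"
    using crt_gen[of "\<Prod>P" q r "\<Prod>P"] by blast
  then obtain n m where e: "r + q*n = \<Prod>P + \<Prod>P * m" by blast
  define y where "y = r + q*n"
  have c: "[y = r] (mod q)" unfolding y_def cong_def by simp
  have y1: "y \<ge> 1" using e P1 unfolding y_def by linarith
  have "okp E p y" if p: "prime p" "p \<le> N" for p
  proof (cases "p = q")
    case True
    then show ?thesis using okp_cong[OF c] ok by simp
  next
    case False
    then have "p \<in> P" unfolding P_def using p by blast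
    then have "p dvd \<Prod>P" using dvd_prodI[OF finP, where f="\<lambda>i. i"] by simp
    moreover have "y = \<Prod>P * (1 + m)" using e unfolding y_def by (simp add: algebra_simps)
    ultimately have "p dvd y" by simp
    then show ?thesis unfolding okp_def by blast
  qed
  then have "y \<in> SS E N" using y1 unfolding SS_def Npos_def by blast
  then show ?thesis using c by blast
qed

lemma filt_le_iff:
  assumes "finite E" "E \<subseteq> Npos" "finite E'" "E' \<subseteq> Npos"
  shows "filt E \<subseteq> filt E' \<longleftrightarrow> (\<forall>q r. prime q \<longrightarrow> okp E' q r \<longrightarrow> okp E q r)"
proof
  assume H: "filt E \<subseteq> filt E'"
  show "\<forall>q r. prime q \<longrightarrow> okp E' q r \<longrightarrow> okp E q r"
  proof (intro allI impI)
    fix q r assume q: "prime q" and ok: "okp E' q r"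
    have "SS E q \<in> filt E'" using H SS_in_filt[OF assms(1,2)] by (rule subsetD)
    then have "\<exists>N. SS E' N \<subseteq> SS E q" using filt_char[OF assms(3,4)] by simp
    then obtain N where N: "SS E' N \<subseteq> SS E q" by blast
    obtain y where y: "y \<in> SS E' N" "[y = r] (mod q)" using exists_in_SS[OF q ok] by blast
    have "y \<in> SS E q" using N y(1) by (rule subsetD)
    then have "okp E q y" using q unfolding SS_def by simp
    then show "okp E q r" using okp_cong[OF y(2)] by simp
  qed
next
  assume H: "\<forall>q r. prime q \<longrightarrow> okp E' q r \<longrightarrow> okp E q r"
  have S: "SS E' N \<subseteq> SS E N" for N
  proof
    fix y assume "y \<in> SS E' N"
    then show "y \<in> SS E N" using H unfolding SS_def by simp
  qed
  show "filt E \<subseteq> filt E'"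
  proof
    fix B assume "B \<in> filt E"
    then have "B \<subseteq> Npos" "\<exists>N. SS E N \<subseteq> B" using filt_char[OF assms(1,2)] by simp_all
    then show "B \<in> filt E'" using filt_char[OF assms(3,4)] S by (meson order_trans)
  qed
qed


lemma open_shift:
  assumes "kirch_open U" "z \<in> U"
  shows "\<exists>b. b \<ge> 1 \<and> coprime z b \<and> squarefree b \<and> {z + b*m | m. True} \<subseteq> U"
proof -
  obtain S where S: "kirch_basic S" "z \<in> S" "S \<subseteq> U" using assms unfolding kirch_open_def by blast
  then obtain a b where ab: "a \<ge> 1" "b \<ge> 1" "coprime a b" "squarefree b" "S = {a + b*n | n. True}"
    unfolding kirch_basic_def by blast
  obtain n0 where n0: "z = a + b*n0" using S(2) ab(5) by blast
  have "gcd b (n0*b + a) = gcd b a" by (rule gcd_add_mult)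
  moreover have "gcd b a = 1" using ab(3) by (metis coprime_iff_gcd_eq_1 gcd.commute)
  moreover have "n0*b + a = z" using n0 by simp
  ultimately have "gcd b z = 1" by simp
  then have cx: "coprime z b" by (metis coprime_iff_gcd_eq_1 gcd.commute)
  have "{z + b*m | m. True} \<subseteq> S"
  proof
    fix w assume "w \<in> {z + b*m | m. True}"
    then obtain m where "w = z + b*m" by blast
    then have "w = a + b*(n0+m)" using n0 by (simp add: algebra_simps)
    then show "w \<in> S" using ab(5) by blast
  qed
  then show ?thesis using ab(2,4) cx S(3) by blast
qed

lemma filt_inf_sub1:
  assumes "B \<in> filt_inf"
  shows "B \<subseteq> Npos \<and> (\<exists>N. TT N \<subseteq> B)"
proof -
  obtain Us where Us: "\<forall>U\<in>set Us. kirch_open U \<and> U \<noteq> {}" "(\<Inter>U\<in>set Us. kirch_closure U) \<subseteq> B"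
    and BN: "B \<subseteq> Npos" using assms unfolding filt_inf_def by blast
  have "\<forall>U\<in>set Us. \<exists>zb. fst zb \<ge> 1 \<and> snd zb \<ge> 1 \<and> coprime (fst zb) (snd zb) \<and> squarefree (snd zb)
          \<and> {fst zb + snd zb*m | m. True} \<subseteq> U"
  proof
    fix U assume U: "U \<in> set Us"
    then obtain z where z: "z \<in> U" using Us(1) by blast
    have "kirch_open U" using U Us(1) by blast
    then have z1: "z \<ge> 1" using z unfolding kirch_open_def Npos_def by blast
    obtain b where "b \<ge> 1 \<and> coprime z b \<and> squarefree b \<and> {z + b*m | m. True} \<subseteq> U"
      using open_shift[OF \<open>kirch_open U\<close> z] by blast
    then show "\<exists>zb. fst zb \<ge> 1 \<and> snd zb \<ge> 1 \<and> coprime (fst zb) (snd zb) \<and> squarefree (snd zb)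
          \<and> {fst zb + snd zb*m | m. True} \<subseteq> U"
      using z1 by (intro exI[of _ "(z, b)"]) simp
  qed
  then obtain zb where zb: "\<forall>U\<in>set Us. fst (zb U) \<ge> 1 \<and> snd (zb U) \<ge> 1 \<and> coprime (fst (zb U)) (snd (zb U))
          \<and> squarefree (snd (zb U)) \<and> {fst (zb U) + snd (zb U)*m | m. True} \<subseteq> U"
    by metis
  define N where "N = (\<Sum>U\<in>set Us. snd (zb U))"
  have "TT N \<subseteq> B"
  proof
    fix y assume y: "y \<in> TT N"
    then have yN: "y \<in> Npos" and ydv: "\<And>p. prime p \<Longrightarrow> odd p \<Longrightarrow> p \<le> N \<Longrightarrow> p dvd y"
      unfolding TT_def by auto
    have "y \<in> kirch_closure U" if U: "U \<in> set Us" for U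
    proof -
      define z where "z = fst (zb U)"
      define b where "b = snd (zb U)"
      have zbU: "z \<ge> 1" "b \<ge> 1" "coprime z b" "squarefree b" "{z + b*m | m. True} \<subseteq> U"
        using zb U unfolding z_def b_def by auto
      have "y \<in> kirch_closure {z + b*m | m. True}"
      proof (rule cl_hard[OF zbU(1-4)])
        show "1 \<le> y" using yN by (simp add: Npos_def)
        fix p assume p: "prime p" "p dvd b"
        show "p dvd y \<or> [y = z] (mod p)"
        proof (cases "odd p")
          case True
          have "b \<le> N" unfolding N_def b_def using U by (intro member_le_sum) auto
          moreover have "p \<le> b" using p zbU(2) by (simp add: dvd_imp_le)
          ultimately show ?thesis using ydv p(1) True by simp
        next
          case False
          then have "2 dvd p" by simp
          then have p2: "p = 2" using primes_dvd_imp_eq[OF two_is_prime_nat p(1)] by simp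
          have "\<not> 2 dvd z"
          proof
            assume "2 dvd z"
            then show False using zbU(3) p p2 by (metis coprime_common_divisor not_prime_unit)
          qed
          then show ?thesis using p2 unfolding cong_def by (simp add: odd_iff_mod_2_eq_one) presburger
        qed
      qed
      then show ?thesis using cl_mono zbU(5) by blast
    qed
    then show "y \<in> B" using Us(2) by blast
  qed
  then show ?thesis using BN by blast
qed


lemma bas_open_odd:
  assumes "prime p" "odd p" "a \<in> {1, 2}"
  shows "kirch_open {a + p*n | n. True}"
proof -
  have "\<not> 2 dvd p" using assms(2) by simp
  then have "coprime 2 p" using prime_imp_coprime[OF two_is_prime_nat] by blast
  then have "coprime a p" using assms(3) by auto
  moreover have "p \<ge> 1" using assms(1) prime_gt_0_nat by (metis Suc_leI One_nat_def)
  moreover have "squarefree p" using assms(1) squarefree_prime by blast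
  moreover have "a \<ge> 1" using assms(3) by auto
  ultimately show ?thesis using basic_open by blast
qed

lemma filt_inf_sub2:
  assumes "B \<subseteq> Npos" "TT N \<subseteq> B"
  shows "B \<in> filt_inf"
proof -
  define P where "P = {p. prime p \<and> odd p \<and> p \<le> N}"
  have finP: "finite P" unfolding P_def by (rule finite_subset[of _ "{..N}"]) auto
  define L where "L = sorted_list_of_set P"
  have setL: "set L = P" unfolding L_def using finP by simp
  define Us where "Us = {1 + 1*n | n::nat. True} # map (\<lambda>p. {1 + p*n | n. True}) L @ map (\<lambda>p. {2 + p*n | n. True}) L"
  have setUs: "set Us = insert {1 + 1*n | n::nat. True} ((\<lambda>p. {1 + p*n | n. True}) ` P \<union> (\<lambda>p. {2 + p*n | n. True}) ` P)"
    unfolding Us_def using setL by simp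
  have "kirch_open {1 + 1*n | n::nat. True}" by (rule basic_open) auto
  moreover have "{1 + 1*n | n::nat. True} \<noteq> {}" by blast
  moreover have "kirch_open {a + p*n | n. True} \<and> {a + p*n | n. True} \<noteq> {}" if "p \<in> P" "a \<in> {1,2}" for p a :: nat
  proof
    show "kirch_open {a + p*n | n. True}" using bas_open_odd that unfolding P_def by blast
    have "a = a + p*0" by simp
    then show "{a + p*n | n. True} \<noteq> {}" by blast
  qed
  ultimately have opens: "\<forall>U\<in>set Us. kirch_open U \<and> U \<noteq> {}" unfolding setUs by blast
  have "(\<Inter>U\<in>set Us. kirch_closure U) \<subseteq> TT N"
  proof
    fix y assume y: "y \<in> (\<Inter>U\<in>set Us. kirch_closure U)"
    have "y \<in> kirch_closure {1 + 1*n | n::nat. True}" using y unfolding setUs by blast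
    then have yN: "y \<in> Npos" using cl_Npos by blast
    have "p dvd y" if p: "prime p" "odd p" "p \<le> N" for p
    proof (rule ccontr)
      assume nd: "\<not> p dvd y"
      have pP: "p \<in> P" unfolding P_def using p by blast
      have "y \<in> kirch_closure {1 + p*n | n. True}" using y pP unfolding setUs by blast
      then have c1: "[y = 1] (mod p)" using cl_easy[OF _ p(1) dvd_refl] nd by blast
      have "y \<in> kirch_closure {2 + p*n | n. True}" using y pP unfolding setUs by blast
      then have c2: "[y = 2] (mod p)" using cl_easy[OF _ p(1) dvd_refl] nd by blast
      have "[1 = 2] (mod p)" using c1 c2 by (meson cong_sym cong_trans)
      moreover have "p > 2" using p(1,2) prime_ge_2_nat by (metis le_neq_implies_less even_numeral)
      ultimately show False unfolding cong_def by simp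
    qed
    then show "y \<in> TT N" using yN unfolding TT_def by blast
  qed
  moreover have "Us \<noteq> []" unfolding Us_def by simp
  ultimately show ?thesis unfolding filt_inf_def using opens assms by blast
qed

lemma filt_inf_char: "B \<in> filt_inf \<longleftrightarrow> B \<subseteq> Npos \<and> (\<exists>N. TT N \<subseteq> B)"
  using filt_inf_sub1 filt_inf_sub2 by blast


lemma SS_TT:
  assumes H: "\<forall>q r. prime q \<longrightarrow> odd q \<longrightarrow> okp E q r \<longrightarrow> q dvd r"
  shows "SS E N = TT N"
proof
  show "SS E N \<subseteq> TT N"
  proof
    fix y assume "y \<in> SS E N"
    then show "y \<in> TT N" using H unfolding SS_def TT_def by blast
  qed
next
  show "TT N \<subseteq> SS E N"
  proof
    fix y assume y: "y \<in> TT N"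
    have "okp E p y" if p: "prime p" "p \<le> N" for p
    proof (cases "odd p")
      case True
      then have "p dvd y" using y p unfolding TT_def by blast
      then show ?thesis unfolding okp_def by blast
    next
      case False
      then have "2 dvd p" by simp
      then have "p = 2" using primes_dvd_imp_eq[OF two_is_prime_nat p(1)] by simp
      then show ?thesis using okp_2 by simp
    qed
    then show "y \<in> SS E N" using y unfolding SS_def TT_def by blast
  qed
qed

lemma TT_Npos: "TT N \<subseteq> Npos" unfolding TT_def by blast

lemma filt_eq_inf_iff:
  assumes "finite E" "E \<subseteq> Npos"
  shows "filt E = filt_inf \<longleftrightarrow> (\<forall>q r. prime q \<longrightarrow> odd q \<longrightarrow> okp E q r \<longrightarrow> q dvd r)"
proof
  assume H: "\<forall>q r. prime q \<longrightarrow> odd q \<longrightarrow> okp E q r \<longrightarrow> q dvd r"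
  have "B \<in> filt E \<longleftrightarrow> B \<in> filt_inf" for B
    unfolding filt_char[OF assms] filt_inf_char SS_TT[OF H] ..
  then show "filt E = filt_inf" by blast
next
  assume eq: "filt E = filt_inf"
  show "\<forall>q r. prime q \<longrightarrow> odd q \<longrightarrow> okp E q r \<longrightarrow> q dvd r"
  proof (intro allI impI)
    fix q r assume q: "prime q" "odd q" and ok: "okp E q r"
    have "TT q \<in> filt_inf" using filt_inf_char TT_Npos by blast
    then have "TT q \<in> filt E" using eq by simp
    then have "\<exists>N. SS E N \<subseteq> TT q" using filt_char[OF assms] by simp
    then obtain N where N: "SS E N \<subseteq> TT q" by blast
    obtain y where y: "y \<in> SS E N" "[y = r] (mod q)" using exists_in_SS[OF q(1) ok] by blast
    have "y \<in> TT q" using N y(1) by (rule subsetD)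
    then have "q dvd y" using q unfolding TT_def by simp
    then show "q dvd r" using cong_dvd_iff[OF y(2)] by simp
  qed
qed

lemma A_iff:
  assumes q: "prime q"
  shows "q \<in> A_set E \<longleftrightarrow> (\<exists>r. okp E q r \<and> \<not> q dvd r)"
proof
  assume "q \<in> A_set E"
  then obtain k where k: "k \<ge> 1" "\<forall>z\<in>E. int q dvd int z \<or> [int z = int k] (mod int q)"
    unfolding A_set_def by blast
  then have k': "\<forall>z\<in>E. q dvd z \<or> [z = k] (mod q)" by (simp add: cong_int_iff)
  show "\<exists>r. okp E q r \<and> \<not> q dvd r"
  proof (cases "q dvd k")
    case True
    have "\<forall>z\<in>E. q dvd z"
    proof
      fix z assume "z \<in> E"
      then have "q dvd z \<or> [z = k] (mod q)" using k' by blast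
      then show "q dvd z" using True cong_dvd_iff by blast
    qed
    then have "okp E q 1" unfolding okp_def by blast
    moreover have "\<not> q dvd 1" using q not_prime_1 by auto
    ultimately show ?thesis by blast
  next
    case False
    have "okp E q k" unfolding okp_def using k' by (meson cong_sym)
    then show ?thesis using False by blast
  qed
next
  assume "\<exists>r. okp E q r \<and> \<not> q dvd r"
  then obtain r where r: "okp E q r" "\<not> q dvd r" by blast
  have r1: "r \<ge> 1" using r(2) by (cases r) auto
  have "\<forall>z\<in>E. q dvd z \<or> [z = r] (mod q)" using r unfolding okp_def by (meson cong_sym)
  then have "\<forall>z\<in>E. int q dvd int z \<or> [int z = int r] (mod int q)" by (simp add: cong_int_iff)
  then show "q \<in> A_set E" unfolding A_set_def using q r1 by blast
qed

lemma Pi_iff: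
  assumes "E \<subseteq> Npos" "prime q"
  shows "q \<in> PiE_primes E \<longleftrightarrow> (\<forall>x\<in>E. q dvd x)"
proof -
  have "x \<noteq> 0" if "x \<in> E" for x using that assms(1) by (auto simp: Npos_def)
  then show ?thesis unfolding PiE_primes_def using assms(2) by (auto simp: in_prime_factors_iff)
qed

lemma prime_not2_odd:
  fixes q :: nat
  assumes "prime q" "q \<noteq> 2"
  shows "odd q"
proof
  assume "even q"
  then have "2 dvd q" by simp
  then show False using primes_dvd_imp_eq[OF two_is_prime_nat assms(1)] assms(2) by simp
qed


lemma okp_E'_p:
  assumes p: "prime p" and r: "\<not> p dvd r"
  shows "okp {r, r+p, r+2*p} p y \<longleftrightarrow> p dvd y \<or> [y = r] (mod p)"
proof -
  have cx: "[x = r] (mod p)" if "x \<in> {r, r+p, r+2*p}" for x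
  proof -
    have "(r + p) mod p = r mod p" "(r + 2*p) mod p = r mod p" by simp_all
    then show ?thesis using that unfolding cong_def by blast
  qed
  have nd: "\<not> p dvd x" if "x \<in> {r, r+p, r+2*p}" for x
    using cx[OF that] r cong_dvd_iff by blast
  have "(\<forall>x\<in>{r, r+p, r+2*p}. \<not> p dvd x \<longrightarrow> [y = x] (mod p)) \<longleftrightarrow> [y = r] (mod p)"
  proof
    assume "\<forall>x\<in>{r, r+p, r+2*p}. \<not> p dvd x \<longrightarrow> [y = x] (mod p)"
    then show "[y = r] (mod p)" using r by blast
  next
    assume yr: "[y = r] (mod p)"
    show "\<forall>x\<in>{r, r+p, r+2*p}. \<not> p dvd x \<longrightarrow> [y = x] (mod p)"
    proof (intro ballI impI)
      fix x assume "x \<in> {r, r+p, r+2*p}"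
      then have "[x = r] (mod p)" by (rule cx)
      then show "[y = x] (mod p)" using yr by (meson cong_sym cong_trans)
    qed
  qed
  then show ?thesis unfolding okp_def by simp
qed

lemma okp_E'_q:
  assumes p: "prime p" and q: "prime q" "odd q" "q \<noteq> p" and ok: "okp {r, r+p, r+2*p} q y"
  shows "q dvd y"
proof (rule ccontr)
  assume ny: "\<not> q dvd y"
  then have H: "\<And>x. x \<in> {r, r+p, r+2*p} \<Longrightarrow> \<not> q dvd x \<Longrightarrow> [y = x] (mod q)"
    using ok unfolding okp_def by blast
  have qp: "\<not> q dvd p"
  proof
    assume "q dvd p"
    then have "q = p" using primes_dvd_imp_eq[OF q(1) p] by blast
    then show False using q(3) by simp
  qed
  have q2p: "\<not> q dvd 2*p"
  proof
    assume "q dvd 2*p"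
    then have "q dvd 2 \<or> q dvd p" using q(1) prime_dvd_mult_iff by blast
    moreover have "\<not> q dvd 2"
    proof
      assume "q dvd 2"
      then have "q = 2" using primes_dvd_imp_eq[OF q(1) two_is_prime_nat] by blast
      then show False using q(2) by simp
    qed
    ultimately show False using qp by blast
  qed
  have diff: "q dvd d" if "[a = a + d] (mod q)" for a d :: nat
  proof -
    have "[a + d = a] (mod q)" using that by (rule cong_sym)
    then have "q dvd (a + d) - a" using cong_altdef_nat[of a "a+d" q] by simp
    then show ?thesis by simp
  qed
  show False
  proof (cases "q dvd r")
    case True
    have a: "\<not> q dvd r + p" using True qp by (simp add: dvd_add_right_iff)
    have b: "\<not> q dvd r + 2*p" using True q2p by (simp add: dvd_add_right_iff)
    have "[y = r + p] (mod q)" using H[of "r+p"] a by simp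
    moreover have "[y = r + 2*p] (mod q)" using H[of "r+2*p"] b by simp
    ultimately have "[r + p = r + 2*p] (mod q)" by (meson cong_sym cong_trans)
    moreover have "r + 2*p = (r + p) + p" by simp
    ultimately have "[r + p = (r + p) + p] (mod q)" by simp
    then show False using diff qp by blast
  next
    case False
    then have c1: "[y = r] (mod q)" using H[of r] by simp
    show False
    proof (cases "q dvd r + p")
      case True
      have "\<not> q dvd r + 2*p"
      proof
        assume "q dvd r + 2*p"
        then have "q dvd (r + 2*p) - (r + p)" using True by (rule dvd_diff_nat)
        then show False using qp by simp
      qed
      then have "[y = r + 2*p] (mod q)" using H[of "r+2*p"] by simp
      then have "[r = r + 2*p] (mod q)" using c1 by (meson cong_sym cong_trans)
      then show False using diff q2p by blast
    next
      case False
      then have "[y = r + p] (mod q)" using H[of "r+p"] by simp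
      then have "[r = r + p] (mod q)" using c1 by (meson cong_sym cong_trans)
      then show False using diff qp by blast
    qed
  qed
qed


theorem lemma3p10:
  fixes E :: "nat set"
  assumes "finite E" and "E \<noteq> {}" and "E \<subseteq> Npos"
  shows "maximal_in (filt_family - {filt_inf}) (filt E) \<longleftrightarrow>
         (\<exists>p::nat. prime p \<and> odd p \<and> p \<notin> PiE_primes E \<and> A_set E = {2, p})"
proof
  assume M: "maximal_in (filt_family - {filt_inf}) (filt E)"
  then have ne: "filt E \<noteq> filt_inf"
    and mx: "\<And>G. G \<in> filt_family - {filt_inf} \<Longrightarrow> filt E \<subseteq> G \<Longrightarrow> G = filt E"
    unfolding maximal_in_def by auto
  obtain p r where p: "prime p" "odd p" and ok: "okp E p r" and nd: "\<not> p dvd r"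
    using ne filt_eq_inf_iff[OF assms(1,3)] by blast
  define E' where "E' = {r, r+p, r+2*p}"
  have r1: "r \<ge> 1" using nd by (cases r) auto
  have fE': "finite E'" unfolding E'_def by simp
  have NE': "E' \<subseteq> Npos" unfolding E'_def Npos_def using r1 by auto
  have okp_p: "okp E' p y \<longleftrightarrow> p dvd y \<or> [y = r] (mod p)" for y
    unfolding E'_def using okp_E'_p[OF p(1) nd] .
  have okp_q: "q dvd y" if "prime q" "odd q" "q \<noteq> p" "okp E' q y" for q y
    using okp_E'_q[OF p(1)] that unfolding E'_def by blast
  have incl: "\<forall>q y. prime q \<longrightarrow> okp E' q y \<longrightarrow> okp E q y"
  proof (intro allI impI)
    fix q y assume q: "prime q" and o: "okp E' q y"
    show "okp E q y"
    proof (cases "q = 2")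
      case True then show ?thesis using okp_2 by simp
    next
      case q2: False
      then have oq: "odd q" using prime_not2_odd q by blast
      show ?thesis
      proof (cases "q = p")
        case True
        then have "p dvd y \<or> [y = r] (mod p)" using o okp_p by simp
        then show ?thesis
        proof
          assume "p dvd y" then show ?thesis using True unfolding okp_def by blast
        next
          assume "[y = r] (mod p)" then show ?thesis using True okp_cong ok by blast
        qed
      next
        case False
        then have "q dvd y" using okp_q q oq o by blast
        then show ?thesis unfolding okp_def by blast
      qed
    qed
  qed
  then have sub: "filt E \<subseteq> filt E'" using filt_le_iff[OF assms(1,3) fE' NE'] by blast
  have "okp E' p r" using okp_p by simp
  then have ne': "filt E' \<noteq> filt_inf" using filt_eq_inf_iff[OF fE' NE'] p nd by blast
  have "filt E' \<in> filt_family - {filt_inf}" using ne' fE' NE' unfolding filt_family_def by blast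
  then have eqE: "filt E' = filt E" using mx sub by blast
  then have bk: "\<forall>q y. prime q \<longrightarrow> okp E q y \<longrightarrow> okp E' q y"
    using filt_le_iff[OF fE' NE' assms(1,3)] by simp
  have notPi: "p \<notin> PiE_primes E"
  proof
    assume "p \<in> PiE_primes E"
    then have "\<forall>x\<in>E. p dvd x" using Pi_iff[OF assms(3) p(1)] by blast
    then have "okp E p (2*r)" unfolding okp_def by blast
    then have "okp E' p (2*r)" using bk p(1) by blast
    then have "p dvd 2*r \<or> [2*r = r] (mod p)" using okp_p by simp
    moreover have "\<not> p dvd 2*r"
    proof
      assume "p dvd 2*r"
      then have "p dvd 2 \<or> p dvd r" using p(1) prime_dvd_mult_iff by blast
      moreover have "\<not> p dvd 2"
      proof
        assume "p dvd 2"
        then have "p = 2" using primes_dvd_imp_eq[OF p(1) two_is_prime_nat] by blast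
        then show False using p(2) by simp
      qed
      ultimately show False using nd by blast
    qed
    moreover have "\<not> [2*r = r] (mod p)"
    proof
      assume "[2*r = r] (mod p)"
      then have "p dvd 2*r - r" using cong_altdef_nat[of r "2*r" p] by simp
      then show False using nd by simp
    qed
    ultimately show False by blast
  qed
  have "A_set E = {2, p}"
  proof
    show "A_set E \<subseteq> {2, p}"
    proof
      fix q assume qA: "q \<in> A_set E"
      then have q: "prime q" unfolding A_set_def by blast
      obtain y where y: "okp E q y" "\<not> q dvd y" using qA A_iff[OF q] by blast
      show "q \<in> {2, p}"
      proof (rule ccontr)
        assume "q \<notin> {2, p}"
        then have "q \<noteq> 2" "q \<noteq> p" by auto
        moreover have "okp E' q y" using bk q y(1) by blast
        ultimately have "q dvd y" using okp_q q prime_not2_odd by blast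
        then show False using y(2) by blast
      qed
    qed
  next
    have "2 \<in> A_set E" using A_iff[OF two_is_prime_nat] okp_2[of E 1] by auto
    moreover have "p \<in> A_set E" using A_iff[OF p(1)] ok nd by blast
    ultimately show "{2, p} \<subseteq> A_set E" by blast
  qed
  then show "\<exists>p::nat. prime p \<and> odd p \<and> p \<notin> PiE_primes E \<and> A_set E = {2, p}"
    using p notPi by blast
next
  assume "\<exists>p::nat. prime p \<and> odd p \<and> p \<notin> PiE_primes E \<and> A_set E = {2, p}"
  then obtain p where p: "prime p" "odd p" and nPi: "p \<notin> PiE_primes E" and A: "A_set E = {2, p}"
    by blast
  obtain x0 where x0: "x0 \<in> E" "\<not> p dvd x0" using nPi Pi_iff[OF assms(3) p(1)] by blast
  have oq: "q dvd y" if q: "prime q" "odd q" "q \<noteq> p" and o: "okp E q y" for q y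
  proof (rule ccontr)
    assume "\<not> q dvd y"
    then have "q \<in> A_set E" using A_iff[OF q(1)] o by blast
    then have "q = 2 \<or> q = p" using A by blast
    then show False using q by auto
  qed
  have "p \<in> A_set E" using A by blast
  then obtain r0 where r0: "okp E p r0" "\<not> p dvd r0" using A_iff[OF p(1)] by blast
  have tox0: "[y = x0] (mod p)" if "okp E p y" "\<not> p dvd y" for y
    using that x0 unfolding okp_def by blast
  have neq: "filt E \<noteq> filt_inf" using filt_eq_inf_iff[OF assms(1,3)] p r0 by blast
  have inF: "filt E \<in> filt_family - {filt_inf}" using neq assms(1,3) unfolding filt_family_def by blast
  have "G = filt E" if G: "G \<in> filt_family - {filt_inf}" and sub: "filt E \<subseteq> G" for G
  proof -
    obtain E' where E': "finite E'" "E' \<subseteq> Npos" "G = filt E'" and Gne: "G \<noteq> filt_inf"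
      using G unfolding filt_family_def by blast
    have incl: "\<forall>q y. prime q \<longrightarrow> okp E' q y \<longrightarrow> okp E q y"
      using sub E'(3) filt_le_iff[OF assms(1,3) E'(1,2)] by simp
    show ?thesis
    proof (cases "\<exists>r1. okp E' p r1 \<and> \<not> p dvd r1")
      case True
      then obtain r1 where r1: "okp E' p r1" "\<not> p dvd r1" by blast
      have r1x: "[r1 = x0] (mod p)" using tox0 incl p(1) r1 by blast
      have "\<forall>q y. prime q \<longrightarrow> okp E q y \<longrightarrow> okp E' q y"
      proof (intro allI impI)
        fix q y assume q: "prime q" and o: "okp E q y"
        show "okp E' q y"
        proof (cases "q = 2")
          case True then show ?thesis using okp_2 by simp
        next
          case q2: False
          show ?thesis
          proof (cases "q = p")
            case True
            show ?thesis
            proof (cases "p dvd y")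
              case True then show ?thesis using \<open>q = p\<close> unfolding okp_def by blast
            next
              case False
              then have "[y = x0] (mod p)" using tox0 o True by blast
              then have "[y = r1] (mod p)" using r1x by (meson cong_sym cong_trans)
              then show ?thesis using okp_cong r1(1) True by blast
            qed
          next
            case False
            then have "q dvd y" using oq q o q2 prime_not2_odd by blast
            then show ?thesis unfolding okp_def by blast
          qed
        qed
      qed
      then have "filt E' \<subseteq> filt E" using filt_le_iff[OF E'(1,2) assms(1,3)] by blast
      then show ?thesis using sub E'(3) by blast
    next
      case False
      have "\<forall>q y. prime q \<longrightarrow> odd q \<longrightarrow> okp E' q y \<longrightarrow> q dvd y"
      proof (intro allI impI)
        fix q y assume q: "prime q" "odd q" and o: "okp E' q y"
        show "q dvd y"
        proof (cases "q = p")
          case True then show ?thesis using False o by blast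
        next
          case qp: False
          have "okp E q y" using incl q o by blast
          then show ?thesis using oq q qp by blast
        qed
      qed
      then have "filt E' = filt_inf" using filt_eq_inf_iff[OF E'(1,2)] by blast
      then show ?thesis using Gne E'(3) by blast
    qed
  qed
  then show "maximal_in (filt_family - {filt_inf}) (filt E)"
    unfolding maximal_in_def using inF by blast
qed

end
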